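(* Let $n\ge 2$ and let $P=[p_{ij}]\in\mathbb{R}^{n\times n}$ be an irreducible row-stochastic matrix, viewed as the transition matrix of a Markov chain (random walk) on the node set $N=\{1,\dots,n\}$. For $i\neq j$ let $\varepsilon_{ij}$ be the probability that the chain started at node $i$ visits node $j$ before returning to node $i$ (i.e. before its first return to $i$ at a time $\ge 1$), and set $\varepsilon_{ii}=\sum_{k\neq i}(1-\varepsilon_{ik})$. Then for all $i\neq j$, $$\varepsilon_{ij}=\mathcal{I}_{\{i,j\}}(P)_{ij},$$ and for all $i\in N$, $$\varepsilon_{ii}=\sum_{k\in N,\,k\neq i}\mathcal{I}_{\{i,k\}}(P)_{ii}.$$ In other words, the matrix $[\varepsilon_{ij}]$ coincides with the effective transition matrix $\mathcal{E}(P)$.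
   Context: For a matrix $M\in\mathbb{R}^{n\times n}$ and $R,C\subseteq N=\{1,\dots,n\}$, $M_{RC}$ denotes the submatrix with rows indexed by $R$ and columns indexed by $C$, and $\bar S=N\setminus S$. The isoradial reduction of $M$ over a nonempty $S\subseteq N$ is $$\mathcal{I}_S(M)=M_{SS}-M_{S\bar S}\big(M_{\bar S\bar S}-\rho(M)I\big)^{-1}M_{\bar S S}\in\mathbb{R}^{|S|\times|S|},$$ where $\rho(M)$ is the spectral radius of $M$ (the correction term is omitted if $\bar S=\emptyset$); its rows and columns are indexed by the elements of $S$, so for $S=\{i,k\}$ the entries are $\mathcal{I}_{\{i,k\}}(M)_{ii},\mathcal{I}_{\{i,k\}}(M)_{ik},\mathcal{I}_{\{i,k\}}(M)_{ki},\mathcal{I}_{\{i,k\}}(M)_{kk}$. (For $M$ nonnegative irreducible these reductions exist.) The effective transition matrix of a nonnegative irreducible $M$ is $\mathcal{E}(M)=[\varepsilon_{ij}]$ with $\varepsilon_{ij}=\mathcal{I}_{\{i,j\}}(M)_{ij}$ for $i\neq j$ and $\varepsilon_{ii}=\sum_{k\neq i}\mathcal{I}_{\{i,k\}}(M)_{ii}$. *)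

theory Defs
  imports "Jordan_Normal_Form.Spectral_Radius" "Jordan_Normal_Form.DL_Submatrix"
    "Jordan_Normal_Form.Gauss_Jordan_Elimination"
begin

text \<open>Nodes are indexed 0..n-1 (instead of 1..n).\<close>

definition row_stochastic :: "real mat \<Rightarrow> bool" where
  "row_stochastic P \<longleftrightarrow> dim_row P = dim_col P
     \<and> (\<forall>i<dim_row P. \<forall>j<dim_col P. P $$ (i,j) \<ge> 0)
     \<and> (\<forall>i<dim_row P. (\<Sum>j<dim_col P. P $$ (i,j)) = 1)"

definition irreducible_mat :: "real mat \<Rightarrow> bool" where
  "irreducible_mat P \<longleftrightarrow> dim_row P = dim_col P
     \<and> (\<forall>i<dim_row P. \<forall>j<dim_row P. \<exists>k. (P ^\<^sub>m k) $$ (i,j) > 0)"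

definition spec_rad :: "real mat \<Rightarrow> real" where
  "spec_rad M = spectral_radius (map_mat complex_of_real M)"

text \<open>Isoradial reduction over S; rows/columns of the result are the elements of S
  in increasing order (as in submatrix).\<close>
definition isoradial_reduction :: "nat set \<Rightarrow> real mat \<Rightarrow> real mat" where
  "isoradial_reduction S M =
     (let Sb = {0..<dim_row M} - S in
      if Sb = {} then submatrix M S S
      else submatrix M S S - submatrix M S Sb
             * the (mat_inverse (submatrix M Sb Sb - spec_rad M \<cdot>\<^sub>m 1\<^sub>m (card Sb)))
             * submatrix M Sb S)"

definition iso_entry :: "nat set \<Rightarrow> real mat \<Rightarrow> nat \<Rightarrow> nat \<Rightarrow> real" where
  "iso_entry S M a b = isoradial_reduction S M $$ (card {x\<in>S. x < a}, card {x\<in>S. x < b})"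

text \<open>Path of length Suc m from i to j with intermediate states x 1, ..., x m.\<close>
definition walk :: "nat \<Rightarrow> nat \<Rightarrow> nat \<Rightarrow> (nat \<Rightarrow> nat) \<Rightarrow> nat \<Rightarrow> nat" where
  "walk i j m x t = (if t = 0 then i else if t = Suc m then j else x t)"

text \<open>Probability that the chain with transition matrix P started at i visits j
  before returning to i: sum over the lengths Suc m of the first hitting time of {i,j}
  (at j) of the probabilities of all paths i, x 1, ..., x m, j with x t not in {i,j}.\<close>
definition visit_before_return :: "real mat \<Rightarrow> nat \<Rightarrow> nat \<Rightarrow> real" where
  "visit_before_return P i j =
     (\<Sum>m. \<Sum>x\<in>{1..m} \<rightarrow>\<^sub>E ({0..<dim_row P} - {i,j}).
        \<Prod>t\<le>m. P $$ (walk i j m x t, walk i j m x (Suc t)))"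

end

theory Submission
  imports Defs
begin

lemma mult_mat_vec_index_sum:
  assumes "A \<in> carrier_mat n n" "v \<in> carrier_vec n" "a < n"
  shows "(A *\<^sub>v v) $ a = (\<Sum>b<n. A $$ (a,b) * v $ b)"
  using assms by (auto simp: scalar_prod_def atLeast0LessThan intro!: sum.cong)

fun RR :: "real mat \<Rightarrow> nat set \<Rightarrow> nat \<Rightarrow> nat \<Rightarrow> nat \<Rightarrow> real" where
  "RR P B 0 a z = P $$ (a,z)"
| "RR P B (Suc m) a z = (\<Sum>b\<in>B. RR P B m a b * P $$ (b,z))"

lemma walk_step:
  "(\<Prod>t\<le>Suc m. P $$ (walk a z (Suc m) (g(Suc m := y)) t, walk a z (Suc m) (g(Suc m := y)) (Suc t)))
   = (\<Prod>t\<le>m. P $$ (walk a y m g t, walk a y m g (Suc t))) * P $$ (y, z)"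
proof -
  have "(\<Prod>t\<le>m. P $$ (walk a z (Suc m) (g(Suc m := y)) t, walk a z (Suc m) (g(Suc m := y)) (Suc t)))
     = (\<Prod>t\<le>m. P $$ (walk a y m g t, walk a y m g (Suc t)))"
    by (intro prod.cong refl) (auto simp: walk_def)
  moreover have "walk a z (Suc m) (g(Suc m := y)) (Suc m) = y"
     "walk a z (Suc m) (g(Suc m := y)) (Suc (Suc m)) = z" by (auto simp: walk_def)
  ultimately show ?thesis by (simp add: prod.atMost_Suc)
qed

lemma path_sum_RR:
  assumes "finite B"
  shows "(\<Sum>x\<in>{1..m} \<rightarrow>\<^sub>E B. \<Prod>t\<le>m. P $$ (walk a z m x t, walk a z m x (Suc t))) = RR P B m a z"
proof (induction m arbitrary: z)
  case 0
  then show ?case by (simp add: walk_def)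
next
  case (Suc m)
  have dom: "{1..Suc m} = insert (Suc m) {1..m}" by auto
  have "(\<Sum>x\<in>{1..Suc m} \<rightarrow>\<^sub>E B. \<Prod>t\<le>Suc m. P $$ (walk a z (Suc m) x t, walk a z (Suc m) x (Suc t)))
     = (\<Sum>p\<in>B \<times> ({1..m} \<rightarrow>\<^sub>E B). (\<lambda>x. \<Prod>t\<le>Suc m. P $$ (walk a z (Suc m) x t, walk a z (Suc m) x (Suc t))) ((\<lambda>(y, g). g(Suc m := y)) p))"
    unfolding dom PiE_insert_eq
    by (subst sum.reindex[OF inj_combinator]) (auto simp: o_def)
  also have "\<dots> = (\<Sum>p\<in>B \<times> ({1..m} \<rightarrow>\<^sub>E B). (\<Prod>t\<le>m. P $$ (walk a (fst p) m (snd p) t, walk a (fst p) m (snd p) (Suc t))) * P $$ (fst p, z))"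
    by (intro sum.cong refl) (clarify, simp only: prod.case fst_conv snd_conv walk_step)
  also have "\<dots> = (\<Sum>y\<in>B. \<Sum>g\<in>{1..m} \<rightarrow>\<^sub>E B. (\<Prod>t\<le>m. P $$ (walk a y m g t, walk a y m g (Suc t))) * P $$ (y, z))"
    unfolding sum.cartesian_product by (rule sum.cong) auto
  also have "\<dots> = (\<Sum>y\<in>B. RR P B m a y * P $$ (y, z))"
    by (intro sum.cong refl) (simp only: sum_distrib_right[symmetric] Suc.IH)
  finally show ?case by simp
qed

lemma RR_first:
  "RR P B (Suc m) a z = (\<Sum>b\<in>B. P $$ (a,b) * RR P B m b z)"
proof (induction m arbitrary: z)
  case 0
  then show ?case by simp
next
  case (Suc m)
  have "RR P B (Suc (Suc m)) a z = (\<Sum>c\<in>B. (\<Sum>b\<in>B. P $$ (a,b) * RR P B m b c) * P $$ (c,z))"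
    using Suc by simp
  also have "\<dots> = (\<Sum>b\<in>B. P $$ (a,b) * (\<Sum>c\<in>B. RR P B m b c * P $$ (c,z)))"
    by (simp add: sum_distrib_right sum_distrib_left mult.assoc) (rule sum.swap)
  finally show ?case by simp
qed

locale stoch =
  fixes P :: "real mat" and n :: nat
  assumes carr: "P \<in> carrier_mat n n"
    and nonneg: "\<And>a b. a < n \<Longrightarrow> b < n \<Longrightarrow> P $$ (a,b) \<ge> 0"
    and rows: "\<And>a. a < n \<Longrightarrow> (\<Sum>b<n. P $$ (a,b)) = 1"
    and irr: "\<And>a b. a < n \<Longrightarrow> b < n \<Longrightarrow> \<exists>k. (P ^\<^sub>m k) $$ (a,b) > 0"
    and npos: "n > 0"
begin

lemma eig_bound:
  assumes ev: "eigenvalue (map_mat complex_of_real P) l"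
  shows "cmod l \<le> 1"
proof -
  let ?A = "map_mat complex_of_real P"
  have A: "?A \<in> carrier_mat n n" using carr by auto
  obtain v where v: "v \<in> carrier_vec n" "v \<noteq> 0\<^sub>v n" "?A *\<^sub>v v = l \<cdot>\<^sub>v v"
    using ev carr unfolding eigenvalue_def eigenvector_def by auto
  define m where "m = Max ((\<lambda>b. cmod (v $ b)) ` {..<n})"
  obtain a where a: "a < n" "cmod (v $ a) = m"
    using Max_in[of "(\<lambda>b. cmod (v $ b)) ` {..<n}"] npos unfolding m_def by fastforce
  have le: "cmod (v $ b) \<le> m" if "b < n" for b
    unfolding m_def using that by (intro Max_ge) auto
  have mpos: "m > 0"
  proof (rule ccontr)
    assume "\<not> m > 0"
    then have "\<And>b. b < n \<Longrightarrow> v $ b = 0" using le by (meson norm_le_zero_iff order_trans not_less)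
    then have "v = 0\<^sub>v n" using v(1) by (intro eq_vecI) auto
    with v(2) show False by simp
  qed
  have "l * v $ a = (?A *\<^sub>v v) $ a" using v(3) a v(1) by simp
  also have "\<dots> = (\<Sum>b<n. complex_of_real (P $$ (a,b)) * v $ b)"
    using mult_mat_vec_index_sum[OF A v(1) a(1)] a carr by (auto intro!: sum.cong)
  finally have eq: "l * v $ a = \<dots>" .
  have "cmod l * m = cmod (l * v $ a)" using a by (simp add: norm_mult)
  also have "\<dots> \<le> (\<Sum>b<n. cmod (complex_of_real (P $$ (a,b)) * v $ b))"
    unfolding eq by (rule norm_sum)
  also have "\<dots> = (\<Sum>b<n. P $$ (a,b) * cmod (v $ b))"
    using nonneg a by (intro sum.cong) (auto simp: norm_mult)
  also have "\<dots> \<le> (\<Sum>b<n. P $$ (a,b) * m)"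
    using nonneg a le by (intro sum_mono mult_left_mono) auto
  also have "\<dots> = m" using rows a by (simp add: sum_distrib_right[symmetric])
  finally show ?thesis using mpos by simp
qed

lemma spec_rad_1: "spec_rad P = 1"
proof -
  let ?A = "map_mat complex_of_real P"
  have A: "?A \<in> carrier_mat n n" using carr by auto
  have "eigenvector ?A ((vec n (\<lambda>_. 1::complex))) 1"
    unfolding eigenvector_def
  proof (intro conjI)
    show "(vec n (\<lambda>_. 1::complex)) \<in> carrier_vec (dim_row ?A)" using carr by auto
    show "(vec n (\<lambda>_. 1::complex)) \<noteq> 0\<^sub>v (dim_row ?A)" 
    proof
      assume "vec n (\<lambda>_. 1::complex) = 0\<^sub>v (dim_row ?A)"
      then have e: "vec n (\<lambda>_. 1::complex) = (0\<^sub>v n :: complex vec)" using carr by simp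
      have "(vec n (\<lambda>_. 1::complex)) $ 0 = 1" "(0\<^sub>v n :: complex vec) $ 0 = 0" using npos by auto
      then show False using e by simp
    qed
    show "?A *\<^sub>v (vec n (\<lambda>_. 1::complex)) = 1 \<cdot>\<^sub>v (vec n (\<lambda>_. 1::complex))"
    proof (rule eq_vecI)
      fix a assume "a < dim_vec (1 \<cdot>\<^sub>v (vec n (\<lambda>_. 1::complex)) :: complex vec)"
      then have a: "a < n" by simp
      have "(?A *\<^sub>v (vec n (\<lambda>_. 1::complex))) $ a = (\<Sum>b<n. ?A $$ (a,b) * (vec n (\<lambda>_. 1::complex)) $ b)"
        by (rule mult_mat_vec_index_sum[OF A _ a]) auto
      also have "\<dots> = complex_of_real (\<Sum>b<n. P $$ (a,b))"
        using carr a by (auto intro!: sum.cong)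
      also have "\<dots> = 1" using rows a by simp
      finally show "(?A *\<^sub>v (vec n (\<lambda>_. 1::complex))) $ a = (1 \<cdot>\<^sub>v (vec n (\<lambda>_. 1::complex))) $ a" using a by simp
    qed (use carr in auto)
  qed
  then have "1 \<in> spectrum ?A" unfolding spectrum_def eigenvalue_def by auto
  then have ge: "1 \<le> spectral_radius ?A" using spectral_radius_mem_max(2)[OF A npos] by force
  from spectral_radius_mem_max(1)[OF A npos] obtain l where
    "l \<in> spectrum ?A" "spectral_radius ?A = cmod l" by auto
  then have "spectral_radius ?A \<le> 1" using eig_bound unfolding spectrum_def by auto
  with ge show ?thesis unfolding spec_rad_def by simp
qed

end

locale pair = stoch +
  fixes i j :: nat
  assumes ij: "i < n" "j < n" "i \<noteq> j"
begin

definition "B = {0..<n} - {i,j}"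

lemma finB: "finite B" unfolding B_def by simp

lemma inB: "b \<in> B \<longleftrightarrow> b < n \<and> b \<noteq> i \<and> b \<noteq> j" unfolding B_def by auto

lemma split_row: "(\<Sum>b<n. f b) = f i + f j + (\<Sum>b\<in>B. f b)"
proof -
  have "{..<n} = insert i (insert j B)" using ij unfolding B_def by auto
  then show ?thesis using ij finB by (simp add: inB add.assoc)
qed

lemma RR_nonneg: "a < n \<Longrightarrow> z < n \<Longrightarrow> RR P B m a z \<ge> 0"
proof (induction m arbitrary: z)
  case 0 then show ?case using nonneg by simp
next
  case (Suc m) then show ?case using nonneg by (auto simp: inB intro!: sum_nonneg)
qed

lemma RR_bound: "a < n \<Longrightarrow> (\<Sum>m<M. RR P B m a i + RR P B m a j) \<le> 1"
proof (induction M arbitrary: a)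
  case 0 then show ?case by simp
next
  case (Suc M)
  have "(\<Sum>m<Suc M. RR P B m a i + RR P B m a j)
     = P $$ (a,i) + P $$ (a,j) + (\<Sum>m<M. RR P B (Suc m) a i + RR P B (Suc m) a j)"
    by (subst sum.lessThan_Suc_shift) (simp only: RR.simps(1))
  also have "(\<Sum>m<M. RR P B (Suc m) a i + RR P B (Suc m) a j)
      = (\<Sum>b\<in>B. P $$ (a,b) * (\<Sum>m<M. RR P B m b i + RR P B m b j))"
    unfolding RR_first
    by (simp add: sum_distrib_left distrib_left sum.distrib sum.swap[where A="{..<M}"])
  also have "\<dots> \<le> (\<Sum>b\<in>B. P $$ (a,b))"
    using Suc nonneg by (intro sum_mono) (auto simp: inB intro!: mult_left_le)
  finally have "(\<Sum>m<Suc M. RR P B m a i + RR P B m a j) \<le> P $$ (a,i) + P $$ (a,j) + (\<Sum>b\<in>B. P $$ (a,b))"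
    by simp
  also have "\<dots> = 1" using rows[OF Suc.prems] split_row[of "\<lambda>b. P $$ (a,b)"] by simp
  finally show ?case .
qed

lemma summable_RR: assumes "a < n" shows "summable (\<lambda>m. RR P B m a j)"
proof (rule summableI_nonneg_bounded)
  show "0 \<le> RR P B m a j" for m using RR_nonneg assms ij by simp
  show "(\<Sum>m<M. RR P B m a j) \<le> 1" for M
  proof -
    have "(\<Sum>m<M. RR P B m a j) \<le> (\<Sum>m<M. RR P B m a i + RR P B m a j)"
      using RR_nonneg assms ij by (intro sum_mono) auto
    then show ?thesis using RR_bound[OF assms, of M] by linarith
  qed
qed

definition "G a = (\<Sum>m. RR P B m a j)"

lemma G_eq: assumes "a < n" shows "G a = P $$ (a,j) + (\<Sum>b\<in>B. P $$ (a,b) * G b)"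
proof -
  have "(\<Sum>m. RR P B (Suc m) a j) = G a - P $$ (a,j)"
    using suminf_split_head[OF summable_RR[OF assms]] unfolding G_def by simp
  moreover have "(\<Sum>m. RR P B (Suc m) a j) = (\<Sum>b\<in>B. P $$ (a,b) * G b)"
  proof -
    have "(\<Sum>m. RR P B (Suc m) a j) = (\<Sum>m. \<Sum>b\<in>B. P $$ (a,b) * RR P B m b j)"
      unfolding RR_first ..
    also have "\<dots> = (\<Sum>b\<in>B. \<Sum>m. P $$ (a,b) * RR P B m b j)"
      by (rule suminf_sum) (auto intro!: summable_mult summable_RR simp: inB)
    also have "\<dots> = (\<Sum>b\<in>B. P $$ (a,b) * G b)"
      unfolding G_def by (intro sum.cong refl suminf_mult summable_RR) (auto simp: inB)
    finally show ?thesis .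
  qed
  ultimately show ?thesis by simp
qed

lemma vbr_G: "visit_before_return P i j = G i"
proof -
  have d: "dim_row P = n" using carr by simp
  show ?thesis unfolding visit_before_return_def G_def d B_def[symmetric] path_sum_RR[OF finB] ..
qed

end

lemma sum_pick:
  assumes "finite (A::nat set)"
  shows "(\<Sum>s<card A. g (pick A s)) = (\<Sum>b\<in>A. g b)"
proof -
  have "bij_betw (pick A) {..<card A} A"
  proof (rule bij_betwI')
    fix x y assume "x \<in> {..<card A}" "y \<in> {..<card A}"
    then have xy: "x < card A" "y < card A" by auto
    show "(pick A x = pick A y) = (x = y)"
    proof
      assume eq: "pick A x = pick A y"
      show "x = y"
      proof (rule ccontr)
        assume "x \<noteq> y"
        then have "x < y \<or> y < x" by arith
        then show False using pick_mono[of y A x] pick_mono[of x A y] eq xy by auto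
      qed
    qed simp
  next
    fix x assume "x \<in> {..<card A}" then show "pick A x \<in> A" by (simp add: pick_in_set)
  next
    fix b assume b: "b \<in> A"
    have "{a\<in>A. a < b} \<subset> A" using b by auto
    then have "card {a\<in>A. a < b} < card A" using assms by (simp add: psubset_card_mono)
    then show "\<exists>x\<in>{..<card A}. b = pick A x" using pick_card_in_set[OF b] by force
  qed
  then show ?thesis by (rule sum.reindex_bij_betw)
qed

context stoch
begin

lemma closed_reach:
  assumes C: "C \<subseteq> {..<n}" and cl: "\<And>c d. c \<in> C \<Longrightarrow> d < n \<Longrightarrow> P $$ (c,d) > 0 \<Longrightarrow> d \<in> C"
    and a: "a \<in> C"
  shows "b < n \<Longrightarrow> (P ^\<^sub>m k) $$ (a,b) > 0 \<Longrightarrow> b \<in> C"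
proof (induction k arbitrary: b)
  case 0
  have "a < n" using a C by auto
  with 0 carr have "a = b" by (auto split: if_splits)
  then show ?case using a by simp
next
  case (Suc k)
  have an: "a < n" using a C by auto
  have Pk: "P ^\<^sub>m k \<in> carrier_mat n n" using carr by simp
  have "(P ^\<^sub>m Suc k) $$ (a,b) = (\<Sum>c<n. (P ^\<^sub>m k) $$ (a,c) * P $$ (c,b))"
    using Pk carr an Suc.prems by (auto simp: scalar_prod_def atLeast0LessThan intro!: sum.cong)
  with Suc.prems have "0 < (\<Sum>c<n. (P ^\<^sub>m k) $$ (a,c) * P $$ (c,b))" by simp
  then obtain c where c: "c < n" "(P ^\<^sub>m k) $$ (a,c) * P $$ (c,b) > 0"
    by (metis (no_types, lifting) lessThan_iff not_le sum_nonpos)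
  have "P $$ (c,b) \<ge> 0" using nonneg c Suc.prems by simp
  with c have "P $$ (c,b) > 0" "(P ^\<^sub>m k) $$ (a,c) > 0"
    by (auto simp: zero_less_mult_iff)
  then show ?case using Suc.IH[OF c(1)] cl Suc.prems(1) by blast
qed

end

context pair
begin

lemma maxp_aux:
  assumes harm: "\<And>b. b \<in> B \<Longrightarrow> f b = (\<Sum>c\<in>B. P $$ (b,c) * f c)"
    and le: "\<And>d. d \<in> B \<Longrightarrow> f d \<le> M" and a: "a \<in> B" "f a = M" and M: "M > 0"
  shows False
proof -
  define C where "C = {b\<in>B. f b = M}"
  have cl: "d \<in> C" if c: "c \<in> C" and d: "d < n" and pcd: "P $$ (c,d) > 0" for c d
  proof -
    have cB: "c \<in> B" "c < n" using c unfolding C_def by (auto simp: inB)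
    have r: "1 = P $$ (c,i) + P $$ (c,j) + (\<Sum>d\<in>B. P $$ (c,d))"
      using rows[OF cB(2)] split_row[of "\<lambda>d. P $$ (c,d)"] by simp
    have "f c = M" using c unfolding C_def by simp
    then have "M = (\<Sum>d\<in>B. P $$ (c,d) * f d)" using harm[OF cB(1)] by simp
    then have hM: "M = (\<Sum>d\<in>B. P $$ (c,d) * f d)" .
    have e1: "(\<Sum>d\<in>B. P $$ (c,d) * (M - f d)) = (\<Sum>d\<in>B. P $$ (c,d)) * M - (\<Sum>d\<in>B. P $$ (c,d) * f d)"
      by (simp add: right_diff_distrib sum_subtractf sum_distrib_right)
    have "(\<Sum>d\<in>B. P $$ (c,d) * (M - f d)) + (P $$ (c,i) + P $$ (c,j)) * M
        = (P $$ (c,i) + P $$ (c,j) + (\<Sum>d\<in>B. P $$ (c,d))) * M - M"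
      unfolding e1 hM[symmetric] by (simp only: distrib_right)
    also have "\<dots> = 0" using r[symmetric] by simp
    finally have s0: "(\<Sum>d\<in>B. P $$ (c,d) * (M - f d)) + (P $$ (c,i) + P $$ (c,j)) * M = 0" .
    have t: "\<And>d. d \<in> B \<Longrightarrow> P $$ (c,d) * (M - f d) \<ge> 0"
      using nonneg le cB by (auto simp: inB)
    then have "(\<Sum>d\<in>B. P $$ (c,d) * (M - f d)) \<ge> 0" by (rule sum_nonneg)
    moreover have "(P $$ (c,i) + P $$ (c,j)) * M \<ge> 0" using nonneg cB ij M by simp
    ultimately have z1: "(\<Sum>d\<in>B. P $$ (c,d) * (M - f d)) = 0"
      and z2: "(P $$ (c,i) + P $$ (c,j)) * M = 0"
      using s0 by linarith+
    show ?thesis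
    proof (cases "d \<in> B")
      case True
      with z1 t finB have "P $$ (c,d) * (M - f d) = 0" by (simp add: sum_nonneg_eq_0_iff)
      with pcd True show ?thesis unfolding C_def by simp
    next
      case False
      then have "d = i \<or> d = j" using d by (auto simp: inB)
      then have "P $$ (c,i) + P $$ (c,j) > 0" using pcd nonneg[of c i] nonneg[of c j] cB ij
        by (elim disjE) (auto simp: add_pos_nonneg add_nonneg_pos)
      with z2 M show ?thesis by simp
    qed
  qed
  obtain k where kpos: "(P ^\<^sub>m k) $$ (a,i) > 0" using irr a ij by (auto simp: inB)
  have sub: "C \<subseteq> {..<n}" unfolding C_def by (auto simp: inB)
  have aC: "a \<in> C" unfolding C_def using a by simp
  have "i \<in> C" by (rule closed_reach[OF sub cl aC ij(1) kpos])
  then show False unfolding C_def by (auto simp: inB)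
qed

lemma maxp:
  assumes harm: "\<And>b. b \<in> B \<Longrightarrow> f b = (\<Sum>c\<in>B. P $$ (b,c) * f c)" and b: "b \<in> B"
  shows "f b = 0"
proof (rule ccontr)
  assume nz: "f b \<noteq> 0"
  define M where "M = Max ((\<lambda>x. \<bar>f x\<bar>) ` B)"
  have leM: "\<bar>f d\<bar> \<le> M" if "d \<in> B" for d unfolding M_def using finB that by simp
  obtain a where a: "a \<in> B" "\<bar>f a\<bar> = M"
    using Max_in[of "(\<lambda>x. \<bar>f x\<bar>) ` B"] finB b unfolding M_def by fastforce
  have Mpos: "M > 0" using leM[OF b] nz by simp
  show False
  proof (cases "f a = M")
    case True
    show False by (rule maxp_aux[OF harm _ a(1) True Mpos]) (use leM in fastforce)+
  next
    case False
    then have fa: "- f a = M" using a by auto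
    have harm': "- f b = (\<Sum>c\<in>B. P $$ (b,c) * - f c)" if "b \<in> B" for b
      using harm[OF that] by (simp add: sum_negf)
    show False by (rule maxp_aux[OF harm' _ a(1) fa Mpos]) (use leM in fastforce)+
  qed
qed

end

lemma card_less: "finite (A::nat set) \<Longrightarrow> a \<in> A \<Longrightarrow> card {x\<in>A. x < a} < card A"
  by (rule psubset_card_mono) auto

context pair
begin

lemma setB: "{x. x < n \<and> x \<in> B} = B" by (auto simp: inB)
lemma setS: "{x. x < n \<and> x \<in> {i,j}} = {i,j}" using ij by auto

abbreviation "kk \<equiv> card B"
abbreviation "KK \<equiv> submatrix P B B - 1 \<cdot>\<^sub>m 1\<^sub>m kk"

lemma dims: "dim_row P = n" "dim_col P = n" using carr by auto

lemma KK_carr: "KK \<in> carrier_mat kk kk"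
  by (auto simp: dim_submatrix dims setB)

lemma pickB: "s < kk \<Longrightarrow> pick B s \<in> B" by (simp add: pick_in_set)

lemma KK_idx: "r < kk \<Longrightarrow> s < kk \<Longrightarrow> KK $$ (r,s) = P $$ (pick B r, pick B s) - (if r = s then 1 else 0)"
  by (simp add: submatrix_index dims setB dim_submatrix)

lemma KK_vec:
  assumes r: "r < kk"
  shows "(KK *\<^sub>v vec kk (\<lambda>s. F (pick B s))) $ r = (\<Sum>c\<in>B. P $$ (pick B r, c) * F c) - F (pick B r)"
proof -
  have "(KK *\<^sub>v vec kk (\<lambda>s. F (pick B s))) $ r = (\<Sum>s<kk. KK $$ (r,s) * F (pick B s))"
    by (rule trans[OF mult_mat_vec_index_sum[OF KK_carr _ r]]) auto
  also have "\<dots> = (\<Sum>s<kk. P $$ (pick B r, pick B s) * F (pick B s) - (if r = s then F (pick B s) else 0))"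
    using r by (intro sum.cong refl) (simp only: lessThan_iff KK_idx[OF r], auto simp: algebra_simps)
  also have "\<dots> = (\<Sum>s<kk. P $$ (pick B r, pick B s) * F (pick B s)) - F (pick B r)"
    using r by (simp add: sum_subtractf)
  also have "\<dots> = (\<Sum>c\<in>B. P $$ (pick B r, c) * F c) - F (pick B r)"
    using sum_pick[OF finB, of "\<lambda>c. P $$ (pick B r, c) * F c"] by simp
  finally show ?thesis .
qed

lemma KK_inv: "\<exists>W. mat_inverse KK = Some W"
proof -
  have "det KK \<noteq> 0"
  proof
    assume "det KK = 0"
    then obtain v where v: "v \<in> carrier_vec kk" "v \<noteq> 0\<^sub>v kk" "KK *\<^sub>v v = 0\<^sub>v kk"
      using det_0_iff_vec_prod_zero_field[OF KK_carr] by auto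
    define f where "f b = v $ card {x\<in>B. x < b}" for b
    have vf: "v = vec kk (\<lambda>s. f (pick B s))"
      using v(1) by (intro eq_vecI) (auto simp: f_def card_pick)
    have harm: "f b = (\<Sum>c\<in>B. P $$ (b,c) * f c)" if b: "b \<in> B" for b
    proof -
      define r where "r = card {x\<in>B. x < b}"
      have r: "r < kk" unfolding r_def by (rule card_less[OF finB b])
      have pr: "pick B r = b" unfolding r_def by (rule pick_card_in_set[OF b])
      have "0 = (KK *\<^sub>v v) $ r" using v(3) r by simp
      also have "\<dots> = (\<Sum>c\<in>B. P $$ (b, c) * f c) - f b"
        using KK_vec[OF r, of f] vf pr by simp
      finally show ?thesis by simp
    qed
    have "v = 0\<^sub>v kk"
    proof (rule eq_vecI)
      fix s assume "s < dim_vec (0\<^sub>v kk :: real vec)"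
      then have s: "s < kk" by simp
      have "v $ s = f (pick B s)" using vf s by simp
      also have "\<dots> = 0" by (rule maxp[OF harm pickB[OF s]])
      finally show "v $ s = 0\<^sub>v kk $ s" using s by simp
    qed (use v in simp)
    with v(2) show False by simp
  qed
  then have "KK \<in> Units (ring_mat TYPE(real) kk ())" by (rule det_non_zero_imp_unit[OF KK_carr])
  then show ?thesis using mat_inverse(1)[OF KK_carr, where b="()"] by (cases "mat_inverse KK") auto
qed

end

context pair
begin

lemma dS_row: "dim_row (submatrix P {i,j} J) = 2" and dS_col: "dim_col (submatrix P J {i,j}) = 2"
  and dB_row: "dim_row (submatrix P B J) = kk" and dB_col: "dim_col (submatrix P J B) = kk"
  unfolding dim_submatrix dims setS setB using ij by auto

lemma cS_row: "card {x. x < dim_row P \<and> x \<in> {i,j}} = 2" and cS_col: "card {x. x < dim_col P \<and> x \<in> {i,j}} = 2"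
  and cB_row: "card {x. x < dim_row P \<and> x \<in> B} = kk" and cB_col: "card {x. x < dim_col P \<and> x \<in> B} = kk"
  unfolding dims setS setB using ij by auto

lemma iso_formula:
  assumes z: "z = i \<or> z = j"
    and harmF: "\<And>b. b \<in> B \<Longrightarrow> F b = P $$ (b,z) + (\<Sum>c\<in>B. P $$ (b,c) * F c)"
  shows "iso_entry {i,j} P i z = P $$ (i,z) + (\<Sum>b\<in>B. P $$ (i,b) * F b)"
proof -
  let ?S = "{i,j}"
  define ri where "ri = card {x\<in>?S. x < i}"
  define rz where "rz = card {x\<in>?S. x < z}"
  have zS: "z \<in> ?S" "z < n" using z ij by auto
  have ri: "ri < 2" unfolding ri_def using card_less[of ?S i] ij by simp
  have rz: "rz < 2" unfolding rz_def using card_less[of ?S z] ij zS by simp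
  have pri: "pick ?S ri = i" unfolding ri_def by (rule pick_card_in_set) simp
  have prz: "pick ?S rz = z" unfolding rz_def by (rule pick_card_in_set[OF zS(1)])
  have Sb: "{0..<dim_row P} - ?S = B" unfolding B_def dims ..
  have Zent: "submatrix P ?S ?S $$ (ri, rz) = P $$ (i,z)"
    unfolding ri_def rz_def by (rule submatrix_index_card) (use ij zS dims in auto)
  have cS: "card ?S = 2" using ij by simp
  show ?thesis
  proof (cases "B = {}")
    case True
    then show ?thesis unfolding iso_entry_def isoradial_reduction_def Let_def Sb
      using Zent ri_def rz_def by simp
  next
    case False
    obtain W where W: "mat_inverse KK = Some W" using KK_inv by auto
    have WK: "W * KK = 1\<^sub>m kk" and Wc: "W \<in> carrier_mat kk kk"
      using mat_inverse(2)[OF KK_carr W] by auto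
    define X where "X = submatrix P ?S B"
    define Y where "Y = submatrix P B ?S"
    define Z where "Z = submatrix P ?S ?S"
    have X: "X \<in> carrier_mat 2 kk" unfolding X_def by (rule carrier_matI) (rule dS_row, rule dB_col)
    have Y: "Y \<in> carrier_mat kk 2" unfolding Y_def by (rule carrier_matI) (rule dB_row, rule dS_col)
    have Zc: "Z \<in> carrier_mat 2 2" unfolding Z_def by (rule carrier_matI) (rule dS_row, rule dS_col)
    have red: "iso_entry ?S P i z = (Z - X * W * Y) $$ (ri, rz)"
      unfolding iso_entry_def isoradial_reduction_def Let_def Sb spec_rad_1 W X_def Y_def Z_def
        ri_def rz_def using False by simp
    define c where "c = vec kk (\<lambda>s. P $$ (pick B s, z))"
    define y where "y = vec kk (\<lambda>s. - F (pick B s))"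
    have colY: "col Y rz = c"
      unfolding c_def
    proof (rule eq_vecI)
      fix s assume "s < dim_vec (vec kk (\<lambda>s. P $$ (pick B s, z)))"
      then have s: "s < kk" by simp
      have "col Y rz $ s = Y $$ (s, rz)" using Y s rz by simp
      also have "\<dots> = P $$ (pick B s, z)" unfolding Y_def using s rz prz
        by (subst submatrix_index) (auto simp only: cS_col cB_row)
      finally show "col Y rz $ s = vec kk (\<lambda>s. P $$ (pick B s, z)) $ s" using s by simp
    qed (use Y in simp)
    have Ky: "KK *\<^sub>v y = c"
    proof (rule eq_vecI)
      fix r assume "r < dim_vec c"
      then have r: "r < kk" unfolding c_def by simp
      have "(KK *\<^sub>v y) $ r = (\<Sum>b\<in>B. P $$ (pick B r, b) * - F b) - (- F (pick B r))"
        unfolding y_def by (rule KK_vec[OF r])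
      also have "\<dots> = F (pick B r) - (\<Sum>b\<in>B. P $$ (pick B r, b) * F b)"
        by (simp add: sum_negf)
      also have "\<dots> = P $$ (pick B r, z)" using harmF[OF pickB[OF r]] by simp
      finally show "(KK *\<^sub>v y) $ r = c $ r" unfolding c_def using r by simp
    qed (use KK_carr in \<open>simp add: c_def\<close>)
    have yc: "y \<in> carrier_vec kk" unfolding y_def by simp
    have Wc': "W *\<^sub>v c = y"
    proof -
      have "W *\<^sub>v c = W *\<^sub>v (KK *\<^sub>v y)" using Ky by simp
      also have "\<dots> = (W * KK) *\<^sub>v y" using assoc_mult_mat_vec[OF Wc KK_carr yc] by simp
      also have "\<dots> = y" using WK yc by simp
      finally show ?thesis .
    qed
    have "(X * W * Y) $$ (ri, rz) = (X * (W * Y)) $$ (ri, rz)"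
      using assoc_mult_mat[OF X Wc Y] by simp
    also have "\<dots> = row X ri \<bullet> col (W * Y) rz"
      using X Wc Y ri rz by simp
    also have "col (W * Y) rz = W *\<^sub>v col Y rz" using col_mult2[OF Wc Y rz] .
    also have "\<dots> = y" using colY Wc' by simp
    also have "row X ri \<bullet> y = (\<Sum>s<kk. X $$ (ri, s) * y $ s)"
      using X ri yc by (simp add: scalar_prod_def atLeast0LessThan)
    also have "\<dots> = (\<Sum>s<kk. - (P $$ (i, pick B s) * F (pick B s)))"
      unfolding y_def X_def using ri pri
      by (intro sum.cong refl) (subst submatrix_index, auto simp only: cS_row cB_col lessThan_iff, simp)
    also have "\<dots> = - (\<Sum>b\<in>B. P $$ (i, b) * F b)"
      using sum_pick[OF finB, of "\<lambda>b. P $$ (i, b) * F b"] by (simp add: sum_negf)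
    finally have XWY: "(X * W * Y) $$ (ri, rz) = - (\<Sum>b\<in>B. P $$ (i, b) * F b)" .
    have "(Z - X * W * Y) $$ (ri, rz) = Z $$ (ri, rz) - (X * W * Y) $$ (ri, rz)"
      using X Wc Y Zc ri rz by simp
    then show ?thesis using red XWY Zent unfolding Z_def by simp
  qed
qed

end

context pair
begin

lemma entry_ij: "iso_entry {i,j} P i j = G i"
proof -
  have "iso_entry {i,j} P i j = P $$ (i,j) + (\<Sum>b\<in>B. P $$ (i,b) * G b)"
  proof (rule iso_formula)
    fix b assume "b \<in> B"
    then have "b < n" by (simp add: inB)
    then show "G b = P $$ (b,j) + (\<Sum>c\<in>B. P $$ (b,c) * G c)" by (rule G_eq)
  qed simp
  also have "\<dots> = G i" using G_eq[OF ij(1)] by simp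
  finally show ?thesis .
qed

lemma entry_ii: "iso_entry {i,j} P i i = 1 - G i"
proof -
  have rowB: "(\<Sum>c\<in>B. P $$ (a,c)) = 1 - P $$ (a,i) - P $$ (a,j)" if "a < n" for a
    using rows[OF that] split_row[of "\<lambda>c. P $$ (a,c)"] by simp
  have "iso_entry {i,j} P i i = P $$ (i,i) + (\<Sum>b\<in>B. P $$ (i,b) * (1 - G b))"
  proof (rule iso_formula)
    fix b assume b: "b \<in> B"
    then have bn: "b < n" by (simp add: inB)
    have "P $$ (b,i) + (\<Sum>c\<in>B. P $$ (b,c) * (1 - G c))
        = P $$ (b,i) + (\<Sum>c\<in>B. P $$ (b,c)) - (\<Sum>c\<in>B. P $$ (b,c) * G c)"
      by (simp add: right_diff_distrib sum_subtractf)
    also have "\<dots> = 1 - G b" using rowB[OF bn] G_eq[OF bn] by simp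
    finally show "1 - G b = P $$ (b,i) + (\<Sum>c\<in>B. P $$ (b,c) * (1 - G c))" by simp
  qed simp
  also have "\<dots> = P $$ (i,i) + (\<Sum>b\<in>B. P $$ (i,b)) - (\<Sum>b\<in>B. P $$ (i,b) * G b)"
    by (simp add: right_diff_distrib sum_subtractf)
  also have "\<dots> = 1 - G i" using rowB[OF ij(1)] G_eq[OF ij(1)] by simp
  finally show ?thesis .
qed

end

theorem theorem1:
  fixes P :: "real mat" and n :: nat and eps :: "nat \<Rightarrow> nat \<Rightarrow> real"
  assumes "P \<in> carrier_mat n n"
    and "n \<ge> 2"
    and "row_stochastic P"
    and "irreducible_mat P"
    and "\<And>i j. i < n \<Longrightarrow> j < n \<Longrightarrow> i \<noteq> j \<Longrightarrow> eps i j = visit_before_return P i j"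
    and "\<And>i. i < n \<Longrightarrow> eps i i = (\<Sum>k\<in>{0..<n} - {i}. 1 - eps i k)"
  shows "(\<forall>i<n. \<forall>j<n. i \<noteq> j \<longrightarrow> eps i j = iso_entry {i,j} P i j)
       \<and> (\<forall>i<n. eps i i = (\<Sum>k\<in>{0..<n} - {i}. iso_entry {i,k} P i i))"
proof -
  have st: "stoch P n"
  proof
    show "P \<in> carrier_mat n n" by (rule assms(1))
    show "0 < n" using assms(2) by simp
    fix a b assume a: "a < n"
    show "(\<Sum>b<n. P $$ (a,b)) = 1" using assms(1,3) a unfolding row_stochastic_def by auto
    assume b: "b < n"
    show "P $$ (a,b) \<ge> 0" using assms(1,3) a b unfolding row_stochastic_def by auto
    show "\<exists>k. (P ^\<^sub>m k) $$ (a,b) > 0" using assms(1,4) a b unfolding irreducible_mat_def by auto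
  qed
  have key: "eps i j = iso_entry {i,j} P i j \<and> 1 - eps i j = iso_entry {i,j} P i i"
    if ij: "i < n" "j < n" "i \<noteq> j" for i j
  proof -
    interpret pair P n i j by (rule pair.intro[OF st]) (unfold_locales, use ij in auto)
    show ?thesis using assms(5)[OF ij] vbr_G entry_ij entry_ii by simp
  qed
  show ?thesis
  proof (intro conjI allI impI)
    fix i j assume "i < n" "j < n" "i \<noteq> j"
    then show "eps i j = iso_entry {i,j} P i j" using key by blast
  next
    fix i assume i: "i < n"
    have "eps i i = (\<Sum>k\<in>{0..<n} - {i}. 1 - eps i k)" by (rule assms(6)[OF i])
    also have "\<dots> = (\<Sum>k\<in>{0..<n} - {i}. iso_entry {i,k} P i i)"
    proof (rule sum.cong[OF refl])
      fix k assume "k \<in> {0..<n} - {i}"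
      then have kn: "k < n" "i \<noteq> k" by auto
      show "1 - eps i k = iso_entry {i,k} P i i" using key[OF i kn] by (rule conjunct2)
    qed
    finally show "eps i i = (\<Sum>k\<in>{0..<n} - {i}. iso_entry {i,k} P i i)" .
  qed
qed

end
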